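(* Let $n\in\mathbb{Z}$ and let $\{a_i\}_{i\in\mathbb{Z}}$ be any strictly increasing sequence of integers. Then $$\sum_{i=-\infty}^{\infty}\left(\frac{1}{2|n-a_i|+1}-\frac{1}{2\big(|n-a_i|+(a_i-a_{i-1})\big)+1}\right)\le\frac43.$$ If furthermore $a_i-a_{i-1}\ge 2$ for all $i\in\mathbb{Z}$, then the same sum is at most $1+\frac15+\frac17-\frac19$. *)

theory Defs
  imports "HOL-Analysis.Analysis"
begin

definition lemma2_term :: "int \<Rightarrow> (int \<Rightarrow> int) \<Rightarrow> int \<Rightarrow> real" where
  "lemma2_term n a i =
     1 / (2 * real_of_int \<bar>n - a i\<bar> + 1)
   - 1 / (2 * (real_of_int \<bar>n - a i\<bar> + real_of_int (a i - a (i - 1))) + 1)"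

end

theory Submission
  imports Defs
begin

definition ff :: "real \<Rightarrow> real" where "ff x = 1 / (2 * x + 1)"

lemma ff_anti: "0 \<le> x \<Longrightarrow> x \<le> y \<Longrightarrow> ff y \<le> ff x"
  unfolding ff_def by (intro divide_left_mono) auto

lemma ff_nonneg: "0 \<le> x \<Longrightarrow> 0 \<le> ff x"
  unfolding ff_def by auto

lemma ff_diff: "0 \<le> u \<Longrightarrow> 0 \<le> g \<Longrightarrow> ff u - ff (u + g) = 2 * g / ((2*u+1) * (2*(u+g)+1))"
  unfolding ff_def by (simp add: field_simps)

lemma ff_diff_mono:
  assumes "0 \<le> u1" "u1 \<le> u2" "0 \<le> g"
  shows "ff u2 - ff (u2 + g) \<le> ff u1 - ff (u1 + g)"
proof -
  have "(2*u1+1) * (2*(u1+g)+1) \<le> (2*u2+1) * (2*(u2+g)+1)"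
    using assms by (intro mult_mono) auto
  moreover have "0 < (2*u1+1) * (2*(u1+g)+1)" using assms by auto
  ultimately have "2 * g / ((2*u2+1) * (2*(u2+g)+1)) \<le> 2 * g / ((2*u1+1) * (2*(u1+g)+1))"
    using assms by (intro divide_left_mono) auto
  thus ?thesis using assms by (simp add: ff_diff)
qed

lemma term_eq: "lemma2_term n a i = ff (real_of_int \<bar>n - a i\<bar>) - ff (real_of_int \<bar>n - a i\<bar> + real_of_int (a i - a (i - 1)))"
  unfolding lemma2_term_def ff_def by (rule refl)

lemma term_left: "a i \<le> n \<Longrightarrow> lemma2_term n a i = ff (real_of_int (n - a i)) - ff (real_of_int (n - a (i - 1)))"
proof -
  assume "a i \<le> n"
  then have h1: "\<bar>n - a i\<bar> = n - a i" by simp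
  have h2: "real_of_int (n - a i) + real_of_int (a i - a (i-1)) = real_of_int (n - a (i-1))" by simp
  show ?thesis by (simp only: term_eq h1 h2)
qed

lemma term_right: "n < a i \<Longrightarrow> lemma2_term n a i = ff (real_of_int (a i - n)) - ff (real_of_int (a i - n) + real_of_int (a i - a (i - 1)))"
proof -
  assume "n < a i"
  then have h1: "\<bar>n - a i\<bar> = a i - n" by simp
  show ?thesis by (simp only: term_eq h1)
qed

lemma sm_gap_nat: "strict_mono (a :: int \<Rightarrow> int) \<Longrightarrow> a (i + int m) - a i \<ge> int m"
proof (induction m)
  case 0 then show ?case by simp
next
  case (Suc m)
  have "i + int m < i + int (Suc m)" by simp
  then have "a (i + int m) < a (i + int (Suc m))" using Suc.prems by (rule strict_monoD[rotated])
  then show ?case using Suc.IH Suc.prems by linarith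
qed

lemma sm_gap: "strict_mono (a :: int \<Rightarrow> int) \<Longrightarrow> i \<le> j \<Longrightarrow> a j - a i \<ge> j - i"
proof -
  assume sm: "strict_mono a" and ij: "i \<le> j"
  have e: "int (nat (j - i)) = j - i" using ij by simp
  have e2: "i + (j - i) = j" by simp
  show ?thesis using sm_gap_nat[OF sm, where i=i and m="nat (j - i)"] unfolding e e2 .
qed

lemma term_nonneg: "strict_mono (a :: int \<Rightarrow> int) \<Longrightarrow> 0 \<le> lemma2_term n a i"
proof -
  assume sm: "strict_mono a"
  have "a (i - 1) < a i" by (rule strict_monoD[OF sm]) simp
  then have "ff (real_of_int \<bar>n - a i\<bar> + real_of_int (a i - a (i - 1))) \<le> ff (real_of_int \<bar>n - a i\<bar>)"
    by (intro ff_anti) simp_all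
  then show ?thesis unfolding term_eq by linarith
qed

lemma exists_k:
  assumes sm: "strict_mono (a :: int \<Rightarrow> int)"
  shows "\<exists>k. a k \<le> n \<and> n < a (k + 1)"
proof -
  define i0 where "i0 = min 0 (n - a 0)"
  have i01: "i0 \<le> 0" and i02: "i0 \<le> n - a 0" by (simp_all add: i0_def)
  have "a 0 - a i0 \<ge> 0 - i0" by (rule sm_gap[OF sm i01])
  hence a0: "a i0 \<le> n" using i02 by linarith
  define N where "N = i0 + int (nat (n - a i0)) + 1"
  have "a N - a i0 \<ge> N - i0" by (rule sm_gap[OF sm]) (simp add: N_def)
  moreover have "N - i0 = n - a i0 + 1" using a0 by (simp add: N_def)
  ultimately have "n < a N" by linarith
  hence ex: "\<exists>m::nat. n < a (i0 + int m + 1)" unfolding N_def by blast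
  define m where "m = (LEAST m::nat. n < a (i0 + int m + 1))"
  have m1: "n < a (i0 + int m + 1)" unfolding m_def by (rule LeastI_ex[OF ex])
  have m2: "a (i0 + int m) \<le> n"
  proof (cases m)
    case 0 then show ?thesis using a0 by simp
  next
    case (Suc m')
    have h: "\<not> n < a (i0 + int m' + 1)" using not_less_Least[of m' "\<lambda>m. n < a (i0 + int m + 1)"]
      Suc m_def by auto
    have eq: "i0 + int m = i0 + int m' + 1" using Suc by simp
    show ?thesis unfolding eq using h by linarith
  qed
  show ?thesis using m1 m2 by blast
qed

context
  fixes n :: int and a :: "int \<Rightarrow> int" and k :: int and c :: int
  assumes sm: "strict_mono a" and k1: "a k \<le> n" and k2: "n < a (k + 1)"
    and c1: "c \<ge> 1" and gaps: "\<forall>i. a i - a (i - 1) \<ge> c"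
begin

lemma left_sum: "(\<Sum>i\<in>{k - int m + 1..k}. lemma2_term n a i) = ff (n - a k) - ff (n - a (k - int m))"
proof (induction m)
  case 0 then show ?case by simp
next
  case (Suc m)
  have s: "{k - int (Suc m) + 1..k} = insert (k - int m) {k - int m + 1..k}" by auto
  have le: "a (k - int m) \<le> n"
    using sm_gap[OF sm, of "k - int m" k] k1 by simp
  have e: "k - int m - 1 = k - int (Suc m)" by simp
  have "lemma2_term n a (k - int m) = ff (n - a (k - int m)) - ff (n - a (k - int (Suc m)))"
    using term_left[where a=a and i="k - int m" and n=n, OF le] unfolding e .
  moreover have "(\<Sum>i\<in>{k - int (Suc m) + 1..k}. lemma2_term n a i) = lemma2_term n a (k - int m) + (\<Sum>i\<in>{k - int m + 1..k}. lemma2_term n a i)"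
    unfolding s by (subst sum.insert) auto
  ultimately show ?case using Suc.IH by linarith
qed

lemma right_le: "i \<ge> k + 2 \<Longrightarrow> lemma2_term n a i \<le> ff (a (i - 1) - n + c) - ff (a i - n + c)"
proof -
  assume i: "i \<ge> k + 2"
  have p: "a (i - 1) > n" using sm_gap[OF sm, of "k+1" "i - 1"] k2 i by simp
  have g: "a i - a (i - 1) \<ge> c" using gaps by auto
  have ineq: "ff (real_of_int (a i - n)) - ff (real_of_int (a i - n) + real_of_int (a i - a (i - 1)))
      \<le> ff (real_of_int (a (i - 1) - n + c)) - ff (real_of_int (a (i - 1) - n + c) + real_of_int (a i - a (i - 1)))"
    using p g c1 by (intro ff_diff_mono) auto
  have E: "real_of_int (a (i - 1) - n + c) + real_of_int (a i - a (i - 1)) = real_of_int (a i - n + c)" by simp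
  have ni: "n < a i" using p g c1 by simp
  show ?thesis unfolding term_right[where a=a and i=i and n=n, OF ni] using ineq unfolding E .
qed

lemma right_sum: "(\<Sum>i\<in>{k + 2..k + 1 + int m}. lemma2_term n a i)
   \<le> ff (a (k + 1) - n + c) - ff (a (k + 1 + int m) - n + c)"
proof (induction m)
  case 0 then show ?case by simp
next
  case (Suc m)
  have s: "{k + 2..k + 1 + int (Suc m)} = insert (k + 2 + int m) {k + 2..k + 1 + int m}" by auto
  have "lemma2_term n a (k + 2 + int m) \<le> ff (a (k + 1 + int m) - n + c) - ff (a (k + 1 + int (Suc m)) - n + c)"
    using right_le[of "k + 2 + int m"] by (simp add: algebra_simps)
  moreover have "(\<Sum>i\<in>{k + 2..k + 1 + int (Suc m)}. lemma2_term n a i) = lemma2_term n a (k + 2 + int m) + (\<Sum>i\<in>{k + 2..k + 1 + int m}. lemma2_term n a i)"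
    unfolding s by (subst sum.insert) auto
  ultimately show ?case using Suc.IH by linarith
qed

lemma interval_bound:
  "(\<Sum>i\<in>{k - int m + 1..k + 1 + int m}. lemma2_term n a i)
    \<le> ff (n - a k) + (ff (a (k+1) - n) - ff (2 * (a (k+1) - n) + (n - a k))) + ff (a (k + 1) - n + c)"
proof -
  have s: "{k - int m + 1..k + 1 + int m} = {k - int m + 1..k} \<union> ({k+1} \<union> {k + 2..k + 1 + int m})" by auto
  have "(\<Sum>i\<in>{k - int m + 1..k + 1 + int m}. lemma2_term n a i)
     = (\<Sum>i\<in>{k - int m + 1..k}. lemma2_term n a i) + (lemma2_term n a (k+1) + (\<Sum>i\<in>{k + 2..k + 1 + int m}. lemma2_term n a i))"
  proof -
    have e: "{k+1} \<union> {k + 2..k + 1 + int m} = insert (k+1) {k + 2..k + 1 + int m}" by auto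
    have "(\<Sum>i\<in>{k - int m + 1..k} \<union> ({k+1} \<union> {k + 2..k + 1 + int m}). lemma2_term n a i)
      = (\<Sum>i\<in>{k - int m + 1..k}. lemma2_term n a i) + (\<Sum>i\<in>{k+1} \<union> {k + 2..k + 1 + int m}. lemma2_term n a i)"
      by (rule sum.union_disjoint) auto
    moreover have "(\<Sum>i\<in>{k+1} \<union> {k + 2..k + 1 + int m}. lemma2_term n a i) = lemma2_term n a (k+1) + (\<Sum>i\<in>{k + 2..k + 1 + int m}. lemma2_term n a i)"
      unfolding e by (rule sum.insert) auto
    ultimately show ?thesis unfolding s by simp
  qed
  moreover have "(\<Sum>i\<in>{k - int m + 1..k}. lemma2_term n a i) \<le> ff (n - a k)"
    unfolding left_sum using sm_gap[OF sm, of "k - int m" k] k1 by (simp add: ff_nonneg)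
  moreover have "lemma2_term n a (k+1) = ff (a (k+1) - n) - ff (2 * (a (k+1) - n) + (n - a k))"
  proof -
    have h2: "real_of_int (a (k+1) - n) + real_of_int (a (k+1) - a (k+1-1)) = real_of_int (2 * (a (k+1) - n) + (n - a k))" by simp
    show ?thesis using term_right[of n a "k+1", OF k2] unfolding h2 .
  qed
  moreover have "(\<Sum>i\<in>{k + 2..k + 1 + int m}. lemma2_term n a i) \<le> ff (a (k + 1) - n + c)"
    using right_sum[of m] sm_gap[OF sm, of "k+1" "k + 1 + int m"] k2 c1 ff_nonneg[of "a (k + 1 + int m) - n + c"]
    by simp
  ultimately show ?thesis by linarith
qed

lemma finite_bound:
  assumes "finite S"
  shows "sum (lemma2_term n a) S
    \<le> ff (n - a k) + (ff (a (k+1) - n) - ff (2 * (a (k+1) - n) + (n - a k))) + ff (a (k + 1) - n + c)"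
proof -
  define M where "M = Max (abs ` S \<union> {0})"
  have M: "\<And>x. x \<in> S \<Longrightarrow> \<bar>x\<bar> \<le> M" unfolding M_def using assms by (intro Max_ge) auto
  define m where "m = nat (M + \<bar>k\<bar> + 1)"
  have sub: "S \<subseteq> {k - int m + 1..k + 1 + int m}"
  proof
    fix x assume "x \<in> S" then have "\<bar>x\<bar> \<le> M" by (rule M)
    moreover have "0 \<le> M" unfolding M_def using assms by (intro Max_ge) auto
    moreover have "int m = M + \<bar>k\<bar> + 1" unfolding m_def using \<open>0 \<le> M\<close> by simp
    ultimately show "x \<in> {k - int m + 1..k + 1 + int m}" unfolding atLeastAtMost_iff by linarith
  qed
  have "sum (lemma2_term n a) S \<le> (\<Sum>i\<in>{k - int m + 1..k + 1 + int m}. lemma2_term n a i)"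
    by (rule sum_mono2[OF _ sub]) (auto intro: term_nonneg[OF sm])
  then show ?thesis using interval_bound[of m] by (rule order_trans)
qed

end

lemma ff_simps: "ff 0 = 1" "ff 1 = 1/3" "ff 2 = 1/5" "ff 3 = 1/7" "ff 4 = 1/9" by (simp_all add: ff_def)

lemma hdec: assumes "1 \<le> y1" "y1 \<le> (y2::real)"
  shows "ff y2 - ff (2 * y2) \<le> ff y1 - ff (2 * y1)"
proof -
  have "8 * 1 * 1 \<le> 8*y1*y2" using assms by (intro mult_mono) auto
  hence "(y2-y1)*(8*y1*y2 - 1) \<ge> 0" using assms by (intro mult_nonneg_nonneg) auto
  hence "2*y2*((2*y1+1)*(2*(y1+y1)+1)) \<le> 2*y1*((2*y2+1)*(2*(y2+y2)+1))" by (simp add: algebra_simps)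
  moreover have "0 < (2*y1+1)*(2*(y1+y1)+1)" "0 < (2*y2+1)*(2*(y2+y2)+1)" using assms by auto
  ultimately have "2*y2/((2*y2+1)*(2*(y2+y2)+1)) \<le> 2*y1/((2*y1+1)*(2*(y1+y1)+1))"
    by (simp add: mult_imp_div_pos_le mult_imp_le_div_pos)
  moreover have e: "2 * y = y + y" for y :: real by simp
  ultimately show ?thesis using ff_diff[of y1 y1] ff_diff[of y2 y2] assms unfolding e by simp
qed

theorem lemma2:
  fixes n :: int and a :: "int \<Rightarrow> int"
  assumes "strict_mono a"
  shows "lemma2_term n a summable_on (UNIV :: int set)
       \<and> (\<Sum>\<^sub>\<infinity>i\<in>(UNIV :: int set). lemma2_term n a i) \<le> 4 / 3
       \<and> ((\<forall>i. a i - a (i - 1) \<ge> 2) \<longrightarrow>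
            (\<Sum>\<^sub>\<infinity>i\<in>(UNIV :: int set). lemma2_term n a i) \<le> 1 + 1/5 + 1/7 - 1/9)"
proof -
  obtain k where k1: "a k \<le> n" and k2: "n < a (k + 1)" using exists_k[OF assms] by blast
  define x where "x = real_of_int (n - a k)"
  define y where "y = real_of_int (a (k+1) - n)"
  have x0: "x \<ge> 0" and y1: "y \<ge> 1" using k1 k2 by (auto simp: x_def y_def)
  have gaps1: "\<forall>i. a i - a (i - 1) \<ge> 1"
  proof
    fix i have "a (i - 1) < a i" by (rule strict_monoD[OF assms]) simp
    thus "a i - a (i - 1) \<ge> 1" by simp
  qed
  have fb1: "\<And>S. finite S \<Longrightarrow> sum (lemma2_term n a) S \<le> ff x + (ff y - ff (2 * y + x)) + ff (y + 1)"
    using finite_bound[OF assms k1 k2 _ gaps1] by (simp add: x_def y_def)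
  have summ: "lemma2_term n a summable_on (UNIV :: int set)"
    by (rule nonneg_bdd_above_summable_on) (auto intro!: term_nonneg[OF assms] bdd_aboveI fb1)
  have "n - a k = 0 \<or> n - a k \<ge> 1" using k1 by linarith
  then have xc: "x = 0 \<or> x \<ge> 1" unfolding x_def by (metis of_int_0 of_int_1_le_iff)
  have "a (k+1) - n = 1 \<or> a (k+1) - n \<ge> 2" using k2 by linarith
  then have yc: "y = 1 \<or> y \<ge> 2" unfolding y_def by (metis of_int_1 of_int_numeral_le_iff)
  have b1: "ff x + (ff y - ff (2 * y + x)) + ff (y + 1) \<le> 4/3"
  proof (cases "x = 0")
    case True
    show ?thesis
    proof (cases "y = 1")
      case True
      then show ?thesis using \<open>x = 0\<close> by (simp add: ff_def)
    next
      case False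
      hence y2: "y \<ge> 2" using yc by simp
      have "ff y - ff (2 * y) \<le> ff 2 - ff (2 * 2)" using hdec[of 2 y] y2 by simp
      moreover have "ff (y + 1) \<le> ff 3" using y2 by (intro ff_anti) auto
      ultimately show ?thesis using \<open>x = 0\<close> by (simp add: ff_simps)
    qed
  next
    case False
    hence "x \<ge> 1" using xc by simp
    hence "ff x \<le> 1/3" using ff_anti[of 1 x] by (simp add: ff_simps)
    moreover have "ff y \<le> 1/3" using ff_anti[of 1 y] y1 by (simp add: ff_simps)
    moreover have "ff (y + 1) \<le> ff 2" using y1 by (intro ff_anti) auto
    moreover have "ff (2 * y + x) \<ge> 0" using x0 y1 by (intro ff_nonneg) auto
    ultimately show ?thesis by (simp add: ff_simps)
  qed
  have part1: "(\<Sum>\<^sub>\<infinity>i\<in>(UNIV :: int set). lemma2_term n a i) \<le> 4 / 3"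
    using infsum_le_finite_sums[OF summ, of "4/3"] fb1 b1 by fastforce
  have part2: "(\<Sum>\<^sub>\<infinity>i\<in>(UNIV :: int set). lemma2_term n a i) \<le> 1 + 1/5 + 1/7 - 1/9"
    if g2: "\<forall>i. a i - a (i - 1) \<ge> 2"
  proof -
    have fb2: "\<And>S. finite S \<Longrightarrow> sum (lemma2_term n a) S \<le> ff x + (ff y - ff (2 * y + x)) + ff (y + 2)"
      using finite_bound[OF assms k1 k2 _ g2] by (simp add: x_def y_def)
    have xy: "x + y \<ge> 2" using g2[rule_format, of "k+1"] by (simp add: x_def y_def)
    have b2: "ff x + (ff y - ff (2 * y + x)) + ff (y + 2) \<le> 1 + 1/5 + 1/7 - 1/9"
    proof (cases "x = 0")
      case True
      hence y2: "y \<ge> 2" using xy by simp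
      have "ff y - ff (2 * y) \<le> ff 2 - ff (2 * 2)" using hdec[of 2 y] y2 by simp
      moreover have "ff (y + 2) \<le> ff 4" using y2 by (intro ff_anti) auto
      ultimately show ?thesis using True by (simp add: ff_simps)
    next
      case False
      hence "x \<ge> 1" using xc by simp
      hence "ff x \<le> 1/3" using ff_anti[of 1 x] by (simp add: ff_simps)
      moreover have "ff y \<le> 1/3" using ff_anti[of 1 y] y1 by (simp add: ff_simps)
      moreover have "ff (y + 2) \<le> ff 3" using y1 by (intro ff_anti) auto
      moreover have "ff (2 * y + x) \<ge> 0" using x0 y1 by (intro ff_nonneg) auto
      ultimately show ?thesis by (simp add: ff_simps)
    qed
    show ?thesis
      using infsum_le_finite_sums[OF summ, of "1 + 1/5 + 1/7 - 1/9"] fb2 b2 by fastforce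
  qed
  show ?thesis using summ part1 part2 by blast
qed

end
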